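(* Let $d\in\mathbb{N}$, $R\in(0,\infty]$, $\varphi\colon[0,R)\to\mathbb{R}$ strictly increasing and convex, $G=\mathring{B}^{(d)}_R=\{x\in\mathbb{R}^d:|x|<R\}$, and $\rho\colon G\to(0,\infty)$, $\rho(x)=\exp(-\varphi(|x|))$. Then for all $x,y\in G$, \[ W\big(U_\rho(x,\cdot),U_\rho(y,\cdot)\big)\le\frac{d}{d+1}\cdot\frac{1}{\lambda_d(B^{(d)}_1)^{1/d}}\int_0^1\Big|\ell_\rho(r\rho(x))^{1/d}-\ell_\rho(r\rho(y))^{1/d}\Big|\,\mathrm{d}r, \] where $\ell_\rho(t)=\lambda_d(G(t))$ is the level-set function of $\rho$.
   Context: $B^{(d)}_1$ is the closed Euclidean unit ball in $\mathbb{R}^d$, $\lambda_d$ Lebesgue measure, $|\cdot|$ Euclidean norm. $G(t)=\{x\in G:\rho(x)\ge t\}$, $U_t$ is the uniform distribution on $G(t)$, and the simple slice sampling kernel is $U_\rho(x,A)=\frac{1}{\rho(x)}\int_0^{\rho(x)}U_t(A)\,\mathrm{d}t$. $W(\mu,\nu)=\inf_\gamma\int|x-y|\,\mathrm{d}\gamma(x,y)$ over couplings $\gamma$ of $\mu,\nu$ is the Wasserstein distance w.r.t. the Euclidean norm. *)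

theory Defs
  imports "HOL-Analysis.Analysis"
begin

definition level_set :: "'a set \<Rightarrow> ('a \<Rightarrow> real) \<Rightarrow> real \<Rightarrow> 'a set" where
  "level_set G \<rho> t = {x \<in> G. \<rho> x \<ge> t}"

definition unif_level :: "('a::euclidean_space) set \<Rightarrow> ('a \<Rightarrow> real) \<Rightarrow> real \<Rightarrow> 'a measure" where
  "unif_level G \<rho> t = uniform_measure lborel (level_set G \<rho> t)"

definition slice_kernel :: "('a::euclidean_space) set \<Rightarrow> ('a \<Rightarrow> real) \<Rightarrow> 'a \<Rightarrow> 'a measure" where
  "slice_kernel G \<rho> x = measure_of UNIV (sets borel)
     (\<lambda>A. ennreal (1 / \<rho> x) * (\<integral>\<^sup>+ t \<in> {0..\<rho> x}. emeasure (unif_level G \<rho> t) A \<partial>lborel))"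

definition couplings :: "('a::euclidean_space) measure \<Rightarrow> 'a measure \<Rightarrow> ('a \<times> 'a) measure set" where
  "couplings \<mu> \<nu> = {\<gamma>. sets \<gamma> = sets (borel \<Otimes>\<^sub>M borel) \<and>
       distr \<gamma> borel fst = \<mu> \<and> distr \<gamma> borel snd = \<nu>}"

definition wasserstein :: "('a::euclidean_space) measure \<Rightarrow> 'a measure \<Rightarrow> ennreal" where
  "wasserstein \<mu> \<nu> = (INF \<gamma> \<in> couplings \<mu> \<nu>. \<integral>\<^sup>+ p. ennreal (norm (fst p - snd p)) \<partial>\<gamma>)"

definition level_fun :: "('a::euclidean_space) set \<Rightarrow> ('a \<Rightarrow> real) \<Rightarrow> real \<Rightarrow> real" where
  "level_fun G \<rho> t = measure lborel (level_set G \<rho> t)"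

end

theory Submission
  imports Defs "HOL-Probability.Probability_Measure"
begin

lemma emeasure_lborel_scale:
  fixes m :: real and S :: "'a::euclidean_space set"
  assumes m: "m > 0" and S: "S \<in> sets borel"
  shows "emeasure lborel S = ennreal (m ^ DIM('a)) * emeasure lborel ((\<lambda>x. m *\<^sub>R x) -` S)"
proof -
  have ne: "m \<noteq> 0" using m by simp
  have "emeasure lborel S = emeasure (density (distr lborel borel (\<lambda>x. (0::'a) + m *\<^sub>R x)) (\<lambda>_. \<bar>m\<bar>^DIM('a))) S"
    using lborel_affine[OF ne, of "0::'a"] by simp
  also have "\<dots> = ennreal (m ^ DIM('a)) * emeasure lborel ((\<lambda>x. m *\<^sub>R x) -` S)"
    using S m by (simp add: emeasure_density emeasure_distr nn_integral_cmult_indicator)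
  finally show ?thesis .
qed

lemma sphere_null: "sphere (c::'a::euclidean_space) r \<in> null_sets lborel"
  using negligible_sphere[of c r]
  by (auto simp: null_sets_completion_iff negligible_iff_null_sets negligible_convex_frontier)

lemma emeasure_between_balls:
  fixes D :: "'a::euclidean_space set"
  assumes "ball 0 m \<subseteq> D" "D \<subseteq> cball 0 m" "D \<in> sets borel" "A \<in> sets borel"
  shows "emeasure lborel (D \<inter> A) = emeasure lborel (cball 0 m \<inter> A)"
proof -
  have "(cball 0 m - D) \<inter> A \<subseteq> sphere 0 m"
  proof
    fix x assume x: "x \<in> (cball 0 m - D) \<inter> A"
    then have "x \<notin> ball 0 m" using assms(1) by auto
    moreover have "x \<in> cball 0 m" using x by auto
    ultimately show "x \<in> sphere 0 m" by simp
  qed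
  hence N: "(cball 0 m - D) \<inter> A \<in> null_sets lborel"
    using sphere_null null_sets_subset assms by (metis borel_closed closed_cball sets.Diff sets.Int sets_lborel)
  have "cball 0 m \<inter> A = (D \<inter> A) \<union> ((cball 0 m - D) \<inter> A)" using assms(2) by auto
  hence "emeasure lborel (cball 0 m \<inter> A) = emeasure lborel (D \<inter> A)"
    using emeasure_Un_null_set[OF _ N, of "D \<inter> A"] assms by simp
  thus ?thesis by simp
qed

lemma uniform_ball_scale:
  fixes D :: "'a::euclidean_space set" and m :: real
  assumes m: "m > 0" and "ball 0 m \<subseteq> D" "D \<subseteq> cball 0 m" and D: "D \<in> sets borel"
  shows "uniform_measure lborel D = distr (uniform_measure lborel (cball 0 1)) borel (\<lambda>u. m *\<^sub>R u)"
proof (rule measure_eqI)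
  show "sets (uniform_measure lborel D) = sets (distr (uniform_measure lborel (cball 0 1)) borel (\<lambda>u. m *\<^sub>R u))"
    by simp
next
  fix A assume "A \<in> sets (uniform_measure lborel D)"
  hence A: "A \<in> sets borel" by simp
  define k where "k = unit_ball_vol (real DIM('a))"
  have k: "k > 0" unfolding k_def by simp
  have eD: "emeasure lborel D = ennreal (k * m ^ DIM('a))"
    using emeasure_between_balls[OF assms(2,3) D, of UNIV] emeasure_cball[of m 0] m k_def by simp
  have e1: "emeasure lborel (cball (0::'a) 1) = ennreal k"
    using emeasure_cball[of 1 "0::'a"] k_def by simp
  have pre: "(\<lambda>x. m *\<^sub>R x) -` (cball 0 m \<inter> A) = cball 0 1 \<inter> (\<lambda>x. m *\<^sub>R x) -` A"
    using m by (auto simp: mem_cball dist_norm)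
  have sc: "emeasure lborel (cball 0 m \<inter> A) = ennreal (m ^ DIM('a)) * emeasure lborel (cball 0 1 \<inter> (\<lambda>x. m *\<^sub>R x) -` A)"
    using emeasure_lborel_scale[OF m, of "cball 0 m \<inter> A"] A pre by simp
  have meas: "(\<lambda>x. m *\<^sub>R x) -` A \<in> sets borel"
  proof -
    have "(\<lambda>x::'a. m *\<^sub>R x) \<in> borel \<rightarrow>\<^sub>M borel" by simp
    from measurable_sets_borel[OF this A] show ?thesis by simp
  qed
  have "emeasure (uniform_measure lborel D) A = emeasure lborel (D \<inter> A) / emeasure lborel D"
    using A D by simp
  also have "\<dots> = (ennreal (m ^ DIM('a)) * emeasure lborel (cball 0 1 \<inter> (\<lambda>x. m *\<^sub>R x) -` A)) / (ennreal (m ^ DIM('a)) * ennreal k)"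
    using emeasure_between_balls[OF assms(2,3) D A] sc eD
    by (simp add: ennreal_mult mult.commute m k less_imp_le)
  also have "\<dots> = emeasure lborel (cball 0 1 \<inter> (\<lambda>x. m *\<^sub>R x) -` A) / ennreal k"
  proof -
    define c where "c = ennreal (m ^ DIM('a))"
    define X where "X = emeasure lborel (cball 0 1 \<inter> (\<lambda>x. m *\<^sub>R x) -` A)"
    have c: "c / c = 1" unfolding c_def using m by (intro ennreal_divide_self) auto
    have "(c * X) / (c * ennreal k) = (c / c) * (X / ennreal k)"
      unfolding divide_ennreal_def using m k
      by (simp add: c_def ennreal_inverse_mult ac_simps)
    thus ?thesis using c by (simp add: c_def X_def)
  qed
  also have "\<dots> = emeasure (distr (uniform_measure lborel (cball 0 1)) borel (\<lambda>u. m *\<^sub>R u)) A"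
    using A meas e1 by (simp add: emeasure_distr)
  finally show "emeasure (uniform_measure lborel D) A = emeasure (distr (uniform_measure lborel (cball 0 1)) borel (\<lambda>u. m *\<^sub>R u)) A" .
qed

lemma integral_poly_01:
  fixes k :: real and d :: nat assumes k: "k \<ge> 0"
  shows "(\<integral>\<^sup>+s. ennreal (k * (1 - s ^ d)) * indicator {0..1} s \<partial>lborel) = ennreal (k * (real d / (real d + 1)))"
proof -
  let ?F = "\<lambda>s::real. k * (s - s ^ (d + 1) / (real d + 1))"
  have "(\<integral>\<^sup>+s. ennreal (k * (1 - s ^ d)) * indicator {0..1} s \<partial>lborel) = ?F 1 - ?F 0"
  proof (rule nn_integral_FTC_Icc)
    show "(\<lambda>s. k * (1 - s ^ d)) \<in> borel_measurable borel" by simp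
    fix x :: real assume x: "x \<in> {0..1}"
    have d1: "DERIV (\<lambda>s. s ^ (d+1)) x :> real (d+1) * x ^ d" using DERIV_pow[of "d+1" x] by simp
    have D1: "DERIV ?F x :> k * (1 - (real (d+1) * x ^ d) / (real d + 1))"
      by (intro DERIV_cmult DERIV_diff DERIV_ident DERIV_cdivide d1)
    have eq: "k * (1 - (real (d+1) * x ^ d) / (real d + 1)) = k * (1 - x ^ d)"
      by (simp add: field_simps)
    show "DERIV ?F x :> k * (1 - x ^ d)" using D1 unfolding eq .
    have "x ^ d \<le> 1" using x by (auto intro: power_le_one)
    thus "0 \<le> k * (1 - x ^ d)" using k by simp
  qed simp
  also have "?F 1 - ?F 0 = k * (real d / (real d + 1))"
    by (simp add: field_simps)
  finally show ?thesis .
qed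

lemma mean_norm_unit_ball:
  "(\<integral>\<^sup>+u. ennreal (norm u) \<partial>uniform_measure lborel (cball (0::'a::euclidean_space) 1))
     = ennreal (real DIM('a) / (real DIM('a) + 1))"
proof -
  define k where "k = unit_ball_vol (real DIM('a))"
  have k: "k > 0" unfolding k_def by simp
  have e1: "emeasure lborel (cball (0::'a) 1) = ennreal k"
    using emeasure_cball[of 1 "0::'a"] k_def by simp
  have PS: "pair_sigma_finite (lborel::'a measure) (lborel::real measure)"
    unfolding pair_sigma_finite_def by (simp add: sigma_finite_lborel)
  define f where "f = (\<lambda>(u::'a) (s::real). indicator {p. 0 \<le> snd p \<and> snd p < norm (fst p) \<and> norm (fst p) \<le> 1} (u, s) :: ennreal)"
  have fm: "case_prod f \<in> borel_measurable (lborel \<Otimes>\<^sub>M lborel)"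
    unfolding f_def by measurable
  have a: "(\<integral>\<^sup>+s. f u s \<partial>lborel) = ennreal (norm u) * indicator (cball 0 1) u" for u
  proof (cases "norm u \<le> 1")
    case True
    have "(\<lambda>s. f u s) = indicator {0..<norm u}" unfolding f_def using True
      by (auto simp: indicator_def fun_eq_iff)
    then show ?thesis using True by simp
  next
    case False
    have "(\<lambda>s. f u s) = (\<lambda>_. 0)" unfolding f_def using False
      by (auto simp: indicator_def fun_eq_iff)
    then show ?thesis using False by simp
  qed
  have b: "(\<integral>\<^sup>+u. f u s \<partial>lborel) = ennreal (k * (1 - s ^ DIM('a))) * indicator {0..1} s" for s
  proof (cases "0 \<le> s \<and> s \<le> 1")
    case True
    have "(\<lambda>u. f u s) = indicator (cball 0 1 - cball 0 s)" unfolding f_def using True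
      by (auto simp: indicator_def fun_eq_iff)
    hence "(\<integral>\<^sup>+u. f u s \<partial>lborel) = emeasure lborel (cball (0::'a) 1 - cball 0 s)" by simp
    also have "\<dots> = emeasure lborel (cball (0::'a) 1) - emeasure lborel (cball (0::'a) s)"
      using True by (intro emeasure_Diff) (auto simp: emeasure_cball)
    also have "\<dots> = ennreal k - ennreal (k * s ^ DIM('a))"
      using True e1 emeasure_cball[of s "0::'a"] k_def by simp
    also have "\<dots> = ennreal (k * (1 - s ^ DIM('a)))"
      using True k by (subst ennreal_minus) (auto simp: algebra_simps)
    finally show ?thesis using True by simp
  next
    case False
    have "(\<lambda>u. f u s) = (\<lambda>_. 0)" unfolding f_def using False
      by (auto simp: indicator_def fun_eq_iff)
    then show ?thesis using False by simp
  qed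
  have "(\<integral>\<^sup>+u. ennreal (norm u) * indicator (cball (0::'a) 1) u \<partial>lborel)
      = (\<integral>\<^sup>+u. (\<integral>\<^sup>+s. f u s \<partial>lborel) \<partial>lborel)" by (simp add: a)
  also have "\<dots> = (\<integral>\<^sup>+s. (\<integral>\<^sup>+u. f u s \<partial>lborel) \<partial>lborel)"
    using pair_sigma_finite.Fubini'[OF PS fm] by simp
  also have "\<dots> = ennreal (k * (real DIM('a) / (real DIM('a) + 1)))"
    using integral_poly_01[of k "DIM('a)"] k by (simp add: b)
  finally have I: "(\<integral>\<^sup>+u. ennreal (norm u) * indicator (cball (0::'a) 1) u \<partial>lborel) = ennreal (k * (real DIM('a) / (real DIM('a) + 1)))" .
  have "(\<integral>\<^sup>+u. ennreal (norm u) \<partial>uniform_measure lborel (cball (0::'a) 1))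
      = (\<integral>\<^sup>+u. ennreal (norm u) * indicator (cball (0::'a) 1) u \<partial>lborel) / emeasure lborel (cball (0::'a) 1)"
    by (subst nn_integral_uniform_measure[where f="\<lambda>u. ennreal (norm u)"]) auto
  also have "\<dots> = ennreal (k * (real DIM('a) / (real DIM('a) + 1))) / ennreal k"
    using I e1 by simp
  also have "\<dots> = ennreal (real DIM('a) / (real DIM('a) + 1))"
    using k by (simp add: divide_ennreal ennreal_mult'[symmetric])
  finally show ?thesis .
qed

lemma radial_set:
  fixes D :: "'a::euclidean_space set"
  assumes rad: "\<And>z w. z \<in> D \<Longrightarrow> norm w \<le> norm z \<Longrightarrow> w \<in> D"
    and bnd: "D \<subseteq> cball 0 M" and ne: "z0 \<in> D"
  obtains m where "m \<ge> norm z0" "ball 0 m \<subseteq> D" "D \<subseteq> cball 0 m" "D = ball 0 m \<or> D = cball 0 m"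
proof -
  let ?N = "norm ` D"
  have bdd: "bdd_above ?N" using bnd unfolding bdd_above_def
    by (intro exI[of _ M]) (auto simp: subset_iff)
  have neN: "?N \<noteq> {}" using ne by auto
  define m where "m = Sup ?N"
  have up: "norm z \<le> m" if "z \<in> D" for z
    unfolding m_def using bdd that by (auto intro: cSup_upper)
  have s1: "ball 0 m \<subseteq> D"
  proof
    fix w :: 'a assume "w \<in> ball 0 m"
    hence "norm w < Sup ?N" by (simp add: m_def)
    then obtain y where "y \<in> ?N" "norm w < y" using less_cSup_iff[OF neN bdd] by blast
    then obtain z where "z \<in> D" "norm w < norm z" by auto
    thus "w \<in> D" using rad by auto
  qed
  have s2: "D \<subseteq> cball 0 m" using up by auto
  have s3: "D = ball 0 m \<or> D = cball 0 m"
  proof (cases "\<exists>z\<in>D. norm z = m")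
    case True
    then obtain z where "z \<in> D" "norm z = m" by auto
    hence "cball 0 m \<subseteq> D" using rad by auto
    thus ?thesis using s2 by auto
  next
    case False
    hence "D \<subseteq> ball 0 m" using up by (force simp: subset_iff)
    thus ?thesis using s1 by auto
  qed
  show ?thesis using that[OF up[OF ne] s1 s2 s3] .
qed

locale slice_setup =
  fixes R :: ereal and \<phi> :: "real \<Rightarrow> real" and G :: "'a::euclidean_space set" and \<rho> :: "'a \<Rightarrow> real"
  assumes R: "R > 0" and smono: "strict_mono_on {t. 0 \<le> t \<and> ereal t < R} \<phi>"
    and cvx: "convex_on {t. 0 \<le> t \<and> ereal t < R} \<phi>"
    and G: "G = {z. ereal (norm z) < R}" and rho: "\<rho> = (\<lambda>z. exp (- \<phi> (norm z)))"
begin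

abbreviation "Dom \<equiv> {t. 0 \<le> t \<and> ereal t < R}"

definition "Lv t = level_set G \<rho> t"

lemma Dom_down: "s \<in> Dom \<Longrightarrow> 0 \<le> r \<Longrightarrow> r \<le> s \<Longrightarrow> r \<in> Dom"
  by (auto intro: le_less_trans[of "ereal r" "ereal s"])

lemma phi_mono: assumes rD: "r \<in> Dom" and sD: "s \<in> Dom" and rs: "r \<le> s" shows "\<phi> r \<le> \<phi> s"
proof (cases "r = s")
  case False
  hence "r < s" using rs by simp
  hence "\<phi> r < \<phi> s" using smono rD sD unfolding strict_mono_on_def by blast
  thus ?thesis by simp
qed simp

lemma cvx_pt: "0 \<le> l \<Longrightarrow> l \<le> 1 \<Longrightarrow> a \<in> Dom \<Longrightarrow> b \<in> Dom \<Longrightarrow> \<phi> ((1 - l) * a + l * b) \<le> (1 - l) * \<phi> a + l * \<phi> b"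
  using convex_onD[OF cvx, of l a b] by simp

lemma zero_Dom: "0 \<in> Dom" using R by (simp add: zero_ereal_def)

lemma in_Lv: "z \<in> Lv t \<longleftrightarrow> ereal (norm z) < R \<and> t \<le> exp (- \<phi> (norm z))"
  unfolding Lv_def level_set_def by (simp add: G rho)

lemma radial: "z \<in> Lv t \<Longrightarrow> norm w \<le> norm z \<Longrightarrow> w \<in> Lv t"
proof -
  assume z: "z \<in> Lv t" and w: "norm w \<le> norm z"
  hence zD: "norm z \<in> Dom" by (simp add: in_Lv)
  hence wD: "norm w \<in> Dom" using w by (intro Dom_down[OF zD]) auto
  have "\<phi> (norm w) \<le> \<phi> (norm z)" using phi_mono[OF wD zD w] .
  hence "exp (- \<phi> (norm z)) \<le> exp (- \<phi> (norm w))" by simp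
  moreover have "t \<le> exp (- \<phi> (norm z))" using z by (simp add: in_Lv)
  ultimately have "t \<le> exp (- \<phi> (norm w))" by linarith
  thus ?thesis using wD by (auto simp: in_Lv)
qed

lemma phi_right_cont:
  assumes e: "e > 0" shows "\<exists>s>0. s \<in> Dom \<and> \<phi> s < \<phi> 0 + e"
proof -
  obtain s0 where s0: "0 < ereal s0" "ereal s0 < R" using ereal_dense2[OF R] by blast
  hence s0p: "s0 > 0" by (simp add: zero_ereal_def)
  hence s0D: "s0 \<in> Dom" using s0 by auto
  have gap: "\<phi> s0 > \<phi> 0" using smono s0D zero_Dom s0p by (auto simp: strict_mono_on_def)
  define l where "l = min 1 (e / (2 * (\<phi> s0 - \<phi> 0)))"
  have l: "0 < l" "l \<le> 1" unfolding l_def using e gap by auto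
  have "\<phi> ((1 - l) * 0 + l * s0) \<le> (1 - l) * \<phi> 0 + l * \<phi> s0"
    using cvx_pt[of l 0 s0] l zero_Dom s0D by simp
  hence "\<phi> (l * s0) \<le> \<phi> 0 + l * (\<phi> s0 - \<phi> 0)" by (simp add: algebra_simps)
  also have "l * (\<phi> s0 - \<phi> 0) \<le> e / 2"
  proof -
    have "l * (\<phi> s0 - \<phi> 0) \<le> (e / (2 * (\<phi> s0 - \<phi> 0))) * (\<phi> s0 - \<phi> 0)"
      using gap unfolding l_def by (intro mult_right_mono) auto
    also have "(e / (2 * (\<phi> s0 - \<phi> 0))) * (\<phi> s0 - \<phi> 0) = e / 2" using gap by (simp add: field_simps)
    finally show ?thesis .
  qed
  finally have "\<phi> (l * s0) < \<phi> 0 + e" using e by simp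
  moreover have "l * s0 > 0" using l s0p by simp
  moreover have "l * s0 \<in> Dom" using l s0p by (intro Dom_down[OF s0D]) (auto simp: mult_left_le_one_le)
  ultimately show ?thesis by blast
qed

lemma Lv_bounded: assumes t: "t > 0" shows "\<exists>M. Lv t \<subseteq> cball 0 M"
proof (cases R)
  case (real r)
  have "Lv t \<subseteq> cball 0 r" using real by (auto simp: in_Lv)
  thus ?thesis by blast
next
  case PInf
  hence allD: "s \<in> Dom" if "s \<ge> 0" for s using that by simp
  have one: "(1::real) \<in> Dom" using allD by simp
  have gap: "\<phi> 1 > \<phi> 0" using smono one zero_Dom by (auto simp: strict_mono_on_def)
  define c where "c = - ln t"
  define M where "M = max 1 ((c - \<phi> 0) / (\<phi> 1 - \<phi> 0))"
  have "norm z \<le> M" if z: "z \<in> Lv t" for z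
  proof (rule ccontr)
    assume "\<not> norm z \<le> M"
    hence zM: "norm z > M" by simp
    define s where "s = norm z"
    let ?s = s
    have s1: "?s > 1" using zM unfolding M_def s_def by simp
    have "\<phi> ((1 - 1/?s) * 0 + (1/?s) * ?s) \<le> (1 - 1/?s) * \<phi> 0 + (1/?s) * \<phi> ?s"
      using cvx_pt[of "1/?s" 0 ?s] s1 zero_Dom allD[of s] by simp
    hence "\<phi> 1 \<le> (1 - 1/?s) * \<phi> 0 + (1/?s) * \<phi> ?s" using s1 by simp
    hence "?s * \<phi> 1 \<le> ?s * ((1 - 1/?s) * \<phi> 0 + (1/?s) * \<phi> ?s)" using s1 by simp
    hence A: "\<phi> 0 + ?s * (\<phi> 1 - \<phi> 0) \<le> \<phi> ?s" using s1 by (simp add: algebra_simps)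
    have "t \<le> exp (- \<phi> ?s)" using z by (simp add: in_Lv s_def)
    hence "ln t \<le> - \<phi> ?s" using t by (metis ln_exp ln_le_cancel_iff exp_gt_zero)
    hence B: "\<phi> ?s \<le> c" unfolding c_def by simp
    have "?s > (c - \<phi> 0) / (\<phi> 1 - \<phi> 0)" using zM unfolding M_def s_def by simp
    hence "?s * (\<phi> 1 - \<phi> 0) > c - \<phi> 0" using gap by (simp add: pos_divide_less_eq)
    thus False using A B by simp
  qed
  hence "Lv t \<subseteq> cball 0 M" by auto
  thus ?thesis by blast
next
  case MInf
  thus ?thesis using R by simp
qed

lemma Lv_mono: "0 < s \<Longrightarrow> s \<le> t \<Longrightarrow> Lv t \<subseteq> Lv s"
  by (auto simp: in_Lv)

lemma Lv_sets: assumes t: "t > 0" shows "Lv t \<in> sets borel" "emeasure lborel (Lv t) < \<infinity>"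
proof -
  obtain M where M: "Lv t \<subseteq> cball 0 M" using Lv_bounded[OF t] by blast
  show "emeasure lborel (Lv t) < \<infinity>"
    using le_less_trans[OF emeasure_mono[OF M, of lborel] emeasure_lborel_cball_finite[of 0 M]] by simp
  show "Lv t \<in> sets borel"
  proof (cases "Lv t = {}")
    case False
    then obtain z0 where "z0 \<in> Lv t" by auto
    then obtain m where "Lv t = ball 0 m \<or> Lv t = cball 0 m"
      using radial_set[of "Lv t" M z0] radial M by metis
    thus ?thesis by auto
  qed simp
qed

lemma Lv_good: assumes t: "t > 0" and z: "z \<in> Lv t" "z \<noteq> 0"
  shows "\<exists>m>0. ball 0 m \<subseteq> Lv t \<and> Lv t \<subseteq> cball 0 m"
proof -
  obtain M where M: "Lv t \<subseteq> cball 0 M" using Lv_bounded[OF t] by blast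
  obtain m where "m \<ge> norm z" "ball 0 m \<subseteq> Lv t" "Lv t \<subseteq> cball 0 m"
    using radial_set[of "Lv t" M z] radial M z by metis
  moreover have "norm z > 0" using z by simp
  ultimately have "m > 0" by linarith
  thus ?thesis using \<open>ball 0 m \<subseteq> Lv t\<close> \<open>Lv t \<subseteq> cball 0 m\<close> by blast
qed

lemma bad_unique:
  assumes x: "x \<in> G" and t1: "0 < t1" "t1 \<le> \<rho> x" "Lv t1 \<subseteq> {0}" and t2: "0 < t2" "t2 \<le> \<rho> x" "Lv t2 \<subseteq> {0}"
  shows "t1 = t2"
proof -
  have False if a: "0 < a" "a \<le> \<rho> x" "Lv a \<subseteq> {0}" and b: "0 < b" "b \<le> \<rho> x" "Lv b \<subseteq> {0}" and ab: "a < b" for a b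
  proof -
    have "x \<in> Lv b" using x b unfolding Lv_def level_set_def by auto
    hence x0: "x = 0" using b by auto
    have "a < exp (- \<phi> 0)" using ab b x0 rho by simp
    hence "ln a < - \<phi> 0" using a by (metis ln_exp ln_less_cancel_iff exp_gt_zero)
    then obtain s where s: "s > 0" "s \<in> Dom" "\<phi> s < \<phi> 0 + (- ln a - \<phi> 0)"
      using phi_right_cont[of "- ln a - \<phi> 0"] by auto
    obtain e :: 'a where e: "e \<in> Basis" using nonempty_Basis by blast
    define w where "w = s *\<^sub>R e"
    have nw: "norm w = s" using s e by (simp add: w_def)
    have "ln a < - \<phi> s" using s by simp
    hence "a < exp (- \<phi> s)" using a by (metis exp_less_cancel_iff exp_ln)
    hence "w \<in> Lv a" using s nw by (simp add: in_Lv)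
    moreover have "w \<noteq> 0" using nw s by auto
    ultimately show False using a by auto
  qed
  thus ?thesis using t1 t2 by (metis linorder_neqE_linordered_idom)
qed

definition kap :: real where "kap = measure lborel (cball (0::'a) 1)"

definition aa :: "real \<Rightarrow> real" where
  "aa t = (if t > 0 then (level_fun G \<rho> t / kap) powr (1 / real DIM('a)) else 0)"

lemma kap: "kap = unit_ball_vol (real DIM('a))" "kap > 0"
  using content_cball[of 1 "0::'a"] by (simp_all add: kap_def)

lemma level_fun_Lv: "level_fun G \<rho> t = measure lborel (Lv t)"
  by (simp add: level_fun_def Lv_def)

lemma aa_good:
  assumes t: "t > 0" and z: "z \<in> Lv t" "z \<noteq> 0"
  shows "unif_level G \<rho> t = distr (uniform_measure lborel (cball (0::'a) 1)) borel (\<lambda>u. aa t *\<^sub>R u)"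
proof -
  obtain m where m: "m > 0" "ball 0 m \<subseteq> Lv t" "Lv t \<subseteq> cball 0 m" using Lv_good[OF t z] by blast
  have S: "Lv t \<in> sets borel" using Lv_sets[OF t] by simp
  have "emeasure lborel (Lv t) = emeasure lborel (cball (0::'a) m)"
    using emeasure_between_balls[OF m(2,3) S, of UNIV] by simp
  also have "\<dots> = ennreal (kap * m ^ DIM('a))" using emeasure_cball[of m "0::'a"] m kap by simp
  finally have "level_fun G \<rho> t = kap * m ^ DIM('a)"
    using m kap by (simp add: level_fun_Lv measure_def)
  hence "level_fun G \<rho> t / kap = m ^ DIM('a)" using kap(2) by simp
  hence "aa t = (m ^ DIM('a)) powr (1 / real DIM('a))" using t by (simp add: aa_def)
  also have "\<dots> = m" using m by (simp add: powr_realpow[symmetric] powr_powr)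
  finally have "aa t = m" .
  thus ?thesis using uniform_ball_scale[OF m(1) m(2) m(3) S] by (simp add: unif_level_def Lv_def)
qed

lemma aa_meas: "aa \<in> borel_measurable borel"
proof -
  let ?f = "\<lambda>t. - ((level_fun G \<rho> t / kap) powr (1 / real DIM('a)))"
  have "mono_on {t. 0 < t} ?f"
  proof (rule mono_onI)
    fix s t :: real assume st: "s \<in> {t. 0 < t}" "t \<in> {t. 0 < t}" "s \<le> t"
    have "Lv t \<subseteq> Lv s" using st by (intro Lv_mono) auto
    hence "measure lborel (Lv t) \<le> measure lborel (Lv s)"
      using Lv_sets[of s] Lv_sets[of t] st
      by (intro measure_mono_fmeasurable) (auto simp: fmeasurable_def)
    hence "level_fun G \<rho> t / kap \<le> level_fun G \<rho> s / kap"
      using kap by (simp add: level_fun_Lv divide_right_mono)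
    hence "(level_fun G \<rho> t / kap) powr (1 / real DIM('a)) \<le> (level_fun G \<rho> s / kap) powr (1 / real DIM('a))"
      using kap by (intro powr_mono2) (auto simp: level_fun_def)
    thus "?f s \<le> ?f t" by simp
  qed
  hence m1: "?f \<in> borel_measurable (restrict_space borel {t. 0 < t})"
    by (rule borel_measurable_mono_on_fnc)
  hence m2: "(\<lambda>t. - ?f t) \<in> borel_measurable (restrict_space borel {t. 0 < t})"
    using borel_measurable_uminus[OF m1] by simp
  have "(\<lambda>t. if 0 < t then - ?f t else 0) \<in> borel_measurable borel"
    by (subst measurable_If_restrict_space_iff) (use m2 in auto)
  thus ?thesis unfolding aa_def[abs_def] minus_minus .
qed

abbreviation UU :: "'a measure" where "UU \<equiv> uniform_measure lborel (cball (0::'a) 1)"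
abbreviation PP :: "real measure" where "PP \<equiv> uniform_measure lborel {0..1::real}"

lemma UU_prob: "prob_space UU"
proof -
  have e: "emeasure lborel (cball (0::'a) 1) = ennreal kap" using emeasure_cball[of 1 "0::'a"] kap(1) by simp
  show ?thesis using kap(2) e by (intro prob_space_uniform_measure) auto
qed

lemma PP_prob: "prob_space PP"
  by (intro prob_space_uniform_measure) auto

lemma sfU: "sigma_finite_measure UU"
  using UU_prob by (simp add: prob_space_imp_sigma_finite)

lemma sfP: "sigma_finite_measure PP"
  using PP_prob by (simp add: prob_space_imp_sigma_finite)

lemma rho_pos: "\<rho> z > 0" by (simp add: rho)

lemma kernel_repr:
  assumes x: "x \<in> G"
  shows "slice_kernel G \<rho> x = distr (PP \<Otimes>\<^sub>M UU) borel (\<lambda>p. aa (fst p * \<rho> x) *\<^sub>R snd p)"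
proof -
  let ?F = "\<lambda>p. aa (fst p * \<rho> x) *\<^sub>R snd p"
  let ?N = "distr (PP \<Otimes>\<^sub>M UU) borel ?F"
  note [measurable] = aa_meas
  have Fm: "?F \<in> (PP \<Otimes>\<^sub>M UU) \<rightarrow>\<^sub>M borel" by measurable
  have rx: "\<rho> x > 0" by (rule rho_pos)
  have "?N = measure_of (space ?N) (sets ?N) (emeasure ?N)" by (rule measure_of_of_measure[symmetric])
  hence N: "?N = measure_of UNIV (sets borel) (emeasure ?N)" by simp
  define f where "f = (\<lambda>A. ennreal (1 / \<rho> x) * (\<integral>\<^sup>+ t \<in> {0..\<rho> x}. emeasure (unif_level G \<rho> t) A \<partial>lborel))"
  have K: "slice_kernel G \<rho> x = measure_of UNIV (sets borel) f" by (simp add: slice_kernel_def f_def)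
  define g where "g = (\<lambda>A t. emeasure UU ((\<lambda>u. aa t *\<^sub>R u) -` A))"
  have gm: "g A \<in> borel_measurable borel" if A: "A \<in> sets borel" for A
  proof -
    have Q: "(\<lambda>(t, u). aa t *\<^sub>R u) -` A \<inter> space (borel \<Otimes>\<^sub>M UU) \<in> sets (borel \<Otimes>\<^sub>M UU)"
      using A by measurable
    have "(\<lambda>t. emeasure UU (Pair t -` ((\<lambda>(t, u). aa t *\<^sub>R u) -` A \<inter> space (borel \<Otimes>\<^sub>M UU)))) \<in> borel_measurable borel"
      by (rule sigma_finite_measure.measurable_emeasure_Pair[OF sfU Q])
    moreover have "\<And>t. Pair t -` ((\<lambda>(t, u). aa t *\<^sub>R u) -` A \<inter> space (borel \<Otimes>\<^sub>M UU)) = (\<lambda>u. aa t *\<^sub>R u) -` A"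
      by (auto simp: space_pair_measure)
    ultimately show ?thesis unfolding g_def by simp
  qed
  have eq: "f A = emeasure ?N A" if A: "A \<in> sets borel" for A
  proof -
    note [measurable] = gm[OF A]
    define bad where "bad = (\<lambda>t. 0 < t \<and> t \<le> \<rho> x \<and> Lv t \<subseteq> {0})"
    define t0 where "t0 = (if \<exists>t. bad t then (SOME t. bad t) else 0)"
    have AE: "AE t in lborel. t \<noteq> 0 \<and> t \<noteq> t0"
      using AE_lborel_singleton[of 0] AE_lborel_singleton[of t0] by eventually_elim auto
    have pt: "emeasure (unif_level G \<rho> t) A * indicator {0..\<rho> x} t = g A t * indicator {0..\<rho> x} t"
      if t: "t \<noteq> 0" "t \<noteq> t0" for t
    proof (cases "t \<in> {0..\<rho> x}")
      case True
      hence tp: "t > 0" "t \<le> \<rho> x" using t by auto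
      have "\<not> bad t"
      proof
        assume bt: "bad t"
        hence "bad t0" unfolding t0_def by (auto intro: someI)
        hence "t = t0" using bt bad_unique[OF x] unfolding bad_def by blast
        thus False using t by simp
      qed
      then obtain z where z: "z \<in> Lv t" "z \<noteq> 0" using tp unfolding bad_def by auto
      have "emeasure (unif_level G \<rho> t) A = g A t"
        unfolding aa_good[OF tp(1) z] g_def using A by (simp add: emeasure_distr)
      thus ?thesis by simp
    qed simp
    have "f A = ennreal (1 / \<rho> x) * (\<integral>\<^sup>+ t. g A t * indicator {0..\<rho> x} t \<partial>lborel)"
      unfolding f_def using pt by (intro arg_cong2[where f="(*)"] refl nn_integral_cong_AE) (use AE in eventually_elim; auto)
    also have "(\<integral>\<^sup>+ t. g A t * indicator {0..\<rho> x} t \<partial>lborel)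
        = ennreal \<bar>\<rho> x\<bar> * (\<integral>\<^sup>+ r. g A (0 + \<rho> x * r) * indicator {0..\<rho> x} (0 + \<rho> x * r) \<partial>lborel)"
      using rx by (intro nn_integral_real_affine) auto
    also have "(\<lambda>r. g A (0 + \<rho> x * r) * indicator {0..\<rho> x} (0 + \<rho> x * r)) = (\<lambda>r. g A (r * \<rho> x) * indicator {0..1} r)"
      using rx by (auto simp: fun_eq_iff indicator_def mult.commute zero_le_mult_iff)
    finally have f1: "f A = ennreal (1 / \<rho> x) * ennreal (\<rho> x) * (\<integral>\<^sup>+ r. g A (r * \<rho> x) * indicator {0..1} r \<partial>lborel)"
      using rx by (simp add: mult.assoc)
    have one: "ennreal (1 / \<rho> x) * ennreal (\<rho> x) = 1"
      using rx by (simp add: ennreal_mult''[symmetric])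
    have "emeasure ?N A = emeasure (PP \<Otimes>\<^sub>M UU) (?F -` A \<inter> space (PP \<Otimes>\<^sub>M UU))"
      using A Fm by (simp add: emeasure_distr)
    also have "\<dots> = (\<integral>\<^sup>+ r. emeasure UU (Pair r -` (?F -` A \<inter> space (PP \<Otimes>\<^sub>M UU))) \<partial>PP)"
      using measurable_sets[OF Fm A] by (intro sigma_finite_measure.emeasure_pair_measure_alt[OF sfU])
    also have "\<dots> = (\<integral>\<^sup>+ r. g A (r * \<rho> x) \<partial>PP)"
      unfolding g_def by (intro nn_integral_cong arg_cong[where f="emeasure UU"]) (auto simp: space_pair_measure)
    also have "\<dots> = (\<integral>\<^sup>+ r. g A (r * \<rho> x) * indicator {0..1} r \<partial>lborel) / emeasure lborel {0..1::real}"
      by (subst nn_integral_uniform_measure) auto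
    also have "\<dots> = (\<integral>\<^sup>+ r. g A (r * \<rho> x) * indicator {0..1} r \<partial>lborel)" by (simp add: divide_ennreal_def)
    finally show ?thesis using f1 one by simp
  qed
  have "measure_of UNIV (sets borel) f = measure_of UNIV (sets borel) (emeasure ?N)"
  proof (rule measure_of_eq)
    fix a :: "'a set" assume "a \<in> sigma_sets UNIV (sets borel)"
    hence "a \<in> sets borel" by (metis sets.sigma_sets_eq space_borel)
    thus "f a = emeasure ?N a" by (rule eq)
  qed simp
  thus ?thesis using K N by simp
qed

lemma lf_meas: "level_fun G \<rho> \<in> borel_measurable borel"
proof -
  have eq: "level_fun G \<rho> = (\<lambda>t. if 0 < t then kap * aa t powr real DIM('a) else level_fun G \<rho> 0)"
  proof
    fix t :: real
    show "level_fun G \<rho> t = (if 0 < t then kap * aa t powr real DIM('a) else level_fun G \<rho> 0)"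
    proof (cases "0 < t")
      case True
      have q: "level_fun G \<rho> t / kap \<ge> 0" using kap(2) by (simp add: level_fun_def)
      have l0: "level_fun G \<rho> t \<ge> 0" by (simp add: level_fun_def)
      have "aa t powr real DIM('a) = level_fun G \<rho> t / kap"
        using True q l0 kap(2) by (simp add: aa_def powr_powr)
      thus ?thesis using True kap(2) by simp
    next
      case False
      have "Lv t = Lv 0" using False rho_pos by (auto simp: Lv_def level_set_def intro: less_imp_le)
      thus ?thesis using False by (simp add: level_fun_Lv)
    qed
  qed
  note [measurable] = aa_meas
  show ?thesis by (subst eq) measurable
qed

lemma main_bound:
  assumes x: "x \<in> G" and y: "y \<in> G"
  shows "wasserstein (slice_kernel G \<rho> x) (slice_kernel G \<rho> y)
     \<le> ennreal (real DIM('a) / (real DIM('a) + 1)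
                * (1 / measure lborel (cball (0::'a) 1) powr (1 / real DIM('a))))
       * (\<integral>\<^sup>+ r \<in> {0..1}. ennreal \<bar>level_fun G \<rho> (r * \<rho> x) powr (1 / real DIM('a))
                                  - level_fun G \<rho> (r * \<rho> y) powr (1 / real DIM('a))\<bar> \<partial>lborel)"
proof -
  note [measurable] = aa_meas lf_meas
  define Fx where "Fx = (\<lambda>p::real \<times> 'a. aa (fst p * \<rho> x) *\<^sub>R snd p)"
  define Fy where "Fy = (\<lambda>p::real \<times> 'a. aa (fst p * \<rho> y) *\<^sub>R snd p)"
  define H where "H = (\<lambda>p. (Fx p, Fy p))"
  have Fxm: "Fx \<in> (PP \<Otimes>\<^sub>M UU) \<rightarrow>\<^sub>M borel" unfolding Fx_def by measurable
  have Fym: "Fy \<in> (PP \<Otimes>\<^sub>M UU) \<rightarrow>\<^sub>M borel" unfolding Fy_def by measurable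
  have Hm: "H \<in> (PP \<Otimes>\<^sub>M UU) \<rightarrow>\<^sub>M (borel \<Otimes>\<^sub>M borel)" unfolding H_def using Fxm Fym by measurable
  define \<gamma> where "\<gamma> = distr (PP \<Otimes>\<^sub>M UU) (borel \<Otimes>\<^sub>M borel) H"
  have c1: "distr \<gamma> borel fst = slice_kernel G \<rho> x"
    unfolding \<gamma>_def kernel_repr[OF x] using Hm
    by (subst distr_distr) (auto simp: H_def Fx_def comp_def)
  have c2: "distr \<gamma> borel snd = slice_kernel G \<rho> y"
    unfolding \<gamma>_def kernel_repr[OF y] using Hm
    by (subst distr_distr) (auto simp: H_def Fy_def comp_def)
  have cp: "\<gamma> \<in> couplings (slice_kernel G \<rho> x) (slice_kernel G \<rho> y)"
    unfolding couplings_def using c1 c2 by (simp add: \<gamma>_def)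
  have "wasserstein (slice_kernel G \<rho> x) (slice_kernel G \<rho> y) \<le> (\<integral>\<^sup>+ p. ennreal (norm (fst p - snd p)) \<partial>\<gamma>)"
    unfolding wasserstein_def using cp by (rule INF_lower)
  also have "\<dots> = (\<integral>\<^sup>+ p. ennreal (norm (Fx p - Fy p)) \<partial>(PP \<Otimes>\<^sub>M UU))"
    unfolding \<gamma>_def using Hm by (subst nn_integral_distr) (auto simp: H_def)
  also have "\<dots> = (\<integral>\<^sup>+ p. ennreal \<bar>aa (fst p * \<rho> x) - aa (fst p * \<rho> y)\<bar> * ennreal (norm (snd p)) \<partial>(PP \<Otimes>\<^sub>M UU))"
    unfolding Fx_def Fy_def
    by (intro nn_integral_cong) (simp add: ennreal_mult'[symmetric] scaleR_diff_left[symmetric])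
  also have "\<dots> = (\<integral>\<^sup>+ r. \<integral>\<^sup>+ u. ennreal \<bar>aa (r * \<rho> x) - aa (r * \<rho> y)\<bar> * ennreal (norm u) \<partial>UU \<partial>PP)"
  proof -
    let ?f = "\<lambda>p::real \<times> 'a. ennreal \<bar>aa (fst p * \<rho> x) - aa (fst p * \<rho> y)\<bar> * ennreal (norm (snd p))"
    have m: "?f \<in> borel_measurable (PP \<Otimes>\<^sub>M UU)" by measurable
    show ?thesis using sigma_finite_measure.nn_integral_fst[OF sfU m] by simp
  qed
  also have "\<dots> = (\<integral>\<^sup>+ r. ennreal \<bar>aa (r * \<rho> x) - aa (r * \<rho> y)\<bar> * ennreal (real DIM('a) / (real DIM('a) + 1)) \<partial>PP)"
    by (intro nn_integral_cong) (simp add: nn_integral_cmult mean_norm_unit_ball)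
  also have "\<dots> = (\<integral>\<^sup>+ r. ennreal \<bar>aa (r * \<rho> x) - aa (r * \<rho> y)\<bar> * ennreal (real DIM('a) / (real DIM('a) + 1)) * indicator {0..1} r \<partial>lborel)"
    by (subst nn_integral_uniform_measure) (auto simp: divide_ennreal_def)
  also have "\<dots> = (\<integral>\<^sup>+ r. ennreal (real DIM('a) / (real DIM('a) + 1) * (1 / kap powr (1 / real DIM('a))))
       * (ennreal \<bar>level_fun G \<rho> (r * \<rho> x) powr (1 / real DIM('a)) - level_fun G \<rho> (r * \<rho> y) powr (1 / real DIM('a))\<bar> * indicator {0..1} r) \<partial>lborel)"
  proof (intro nn_integral_cong)
    fix r :: real
    show "ennreal \<bar>aa (r * \<rho> x) - aa (r * \<rho> y)\<bar> * ennreal (real DIM('a) / (real DIM('a) + 1)) * indicator {0..1} r =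
       ennreal (real DIM('a) / (real DIM('a) + 1) * (1 / kap powr (1 / real DIM('a)))) *
       (ennreal \<bar>level_fun G \<rho> (r * \<rho> x) powr (1 / real DIM('a)) - level_fun G \<rho> (r * \<rho> y) powr (1 / real DIM('a))\<bar> * indicator {0..1} r)"
    proof (cases "r \<in> {0..1}")
      case False thus ?thesis by simp
    next
      case True
      let ?e = "1 / real DIM('a)"
      have D: "\<bar>aa (r * \<rho> x) - aa (r * \<rho> y)\<bar> = (1 / kap powr ?e) * \<bar>level_fun G \<rho> (r * \<rho> x) powr ?e - level_fun G \<rho> (r * \<rho> y) powr ?e\<bar>"
      proof (cases "r = 0")
        case True thus ?thesis by (simp add: aa_def)
      next
        case False
        hence rp: "r > 0" using True by auto
        have "aa (r * \<rho> z) = level_fun G \<rho> (r * \<rho> z) powr ?e / kap powr ?e" for z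
          using rp rho_pos[of z] kap(2) by (simp add: aa_def powr_divide level_fun_def)
        hence "aa (r * \<rho> x) - aa (r * \<rho> y) = (level_fun G \<rho> (r * \<rho> x) powr ?e - level_fun G \<rho> (r * \<rho> y) powr ?e) / kap powr ?e"
          by (simp add: diff_divide_distrib)
        thus ?thesis using kap(2) by (simp add: abs_divide)
      qed
      show ?thesis using True unfolding D
        by (simp add: ennreal_mult'[symmetric] ennreal_mult''[symmetric] ac_simps)
    qed
  qed
  also have "\<dots> = ennreal (real DIM('a) / (real DIM('a) + 1) * (1 / kap powr (1 / real DIM('a))))
       * (\<integral>\<^sup>+ r \<in> {0..1}. ennreal \<bar>level_fun G \<rho> (r * \<rho> x) powr (1 / real DIM('a))
                                  - level_fun G \<rho> (r * \<rho> y) powr (1 / real DIM('a))\<bar> \<partial>lborel)"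
    by (intro nn_integral_cmult) measurable
  finally show ?thesis by (simp add: kap_def)
qed

end

theorem mainTheorem3:
  fixes R :: ereal and \<phi> :: "real \<Rightarrow> real" and x y :: "'a::euclidean_space"
  assumes "R > 0"
    and "strict_mono_on {t. 0 \<le> t \<and> ereal t < R} \<phi>"
    and "convex_on {t. 0 \<le> t \<and> ereal t < R} \<phi>"
    and "G = {z::'a. ereal (norm z) < R}"
    and "\<rho> = (\<lambda>z::'a. exp (- \<phi> (norm z)))"
    and "x \<in> G" and "y \<in> G"
  shows "wasserstein (slice_kernel G \<rho> x) (slice_kernel G \<rho> y)
     \<le> ennreal (real DIM('a) / (real DIM('a) + 1)
                * (1 / measure lborel (cball (0::'a) 1) powr (1 / real DIM('a))))
       * (\<integral>\<^sup>+ r \<in> {0..1}. ennreal \<bar>level_fun G \<rho> (r * \<rho> x) powr (1 / real DIM('a))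
                                  - level_fun G \<rho> (r * \<rho> y) powr (1 / real DIM('a))\<bar> \<partial>lborel)"
proof -
  interpret slice_setup R \<phi> G \<rho>
    using assms(1-5) by unfold_locales
  show ?thesis using main_bound[OF assms(6,7)] .
qed

end
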